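(* Let $f:(M,g_M)\to(N,g_N)$ be a conformal Riemannian morphism between Riemannian manifolds whose Riemannian factor $\wedge_f$ is bounded below by a positive number. Define $\rho:M\to\mathbb{Z}$ by $\rho(x)=\mathrm{rank}(df_x)$. Then $\rho$ is locally constant, and hence constant on each connected component of $M$.
   Context: A linear map $T:V\to W$ between real inner-product spaces is a geometric function if there exist a subspace $C\subset V$ with $V=\ker T\oplus C$ and $r>0$ with $\langle T u,T v\rangle=r\langle u,v\rangle$ for all $u,v\in C$ ($r$ is a conformality factor, $C$ a Conf subspace $\mathrm{Conf}(T)$). A smooth $f:(M,g_M)\to(N,g_N)$ is a conformal Riemannian morphism if there is a smooth $\wedge_f:M\to\mathbb{R}^{+}$, called the Riemannian factor, such that each $df_x$ is a geometric function with conformality factor $\wedge_f(x)$. *)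

theory Defs
  imports "HOL-Analysis.Analysis"
begin

coinductive smooth_real :: "(real^'m) set \<Rightarrow> (real^'m \<Rightarrow> real) \<Rightarrow> bool" for S where
  "(\<forall>x\<in>S. g differentiable (at x)) \<Longrightarrow>
   (\<forall>i. smooth_real S (\<lambda>x. frechet_derivative g (at x) (axis i 1))) \<Longrightarrow>
   smooth_real S g"

definition smooth_map :: "(real^'m) set \<Rightarrow> (real^'m \<Rightarrow> real^'n) \<Rightarrow> bool" where
  "smooth_map S F \<longleftrightarrow> (\<forall>j. smooth_real S (\<lambda>x. F x $ j))"

type_synonym ('a, 'm) chart = "'a set \<times> ('a \<Rightarrow> real^'m)"

definition is_chart :: "('a::topological_space, 'm::finite) chart \<Rightarrow> bool" where
  "is_chart c \<longleftrightarrow> (case c of (U, \<phi>) \<Rightarrow>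
      open U \<and> open (\<phi> ` U) \<and> inj_on \<phi> U \<and> continuous_on U \<phi> \<and>
      continuous_on (\<phi> ` U) (inv_into U \<phi>))"

text \<open>A smooth atlas on the whole space (the manifold is the type 'a).\<close>
definition smooth_atlas :: "('a::topological_space, 'm::finite) chart set \<Rightarrow> bool" where
  "smooth_atlas A \<longleftrightarrow>
     (\<forall>c\<in>A. is_chart c) \<and> (\<Union>(fst ` A) = UNIV) \<and>
     (\<forall>(U,\<phi>)\<in>A. \<forall>(V,\<psi>)\<in>A. smooth_map (\<phi> ` (U \<inter> V)) (\<psi> \<circ> inv_into U \<phi>))"

definition gform :: "real^'m^'m \<Rightarrow> real^'m \<Rightarrow> real^'m \<Rightarrow> real" where
  "gform G u v = u \<bullet> (G *v v)"

text \<open>A Riemannian metric is given by its local representation G c p (the Gram matrix of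
  the metric in the chart c at the coordinate point p), smooth, symmetric positive definite,
  and transforming correctly under changes of charts.\<close>
definition riemannian_metric ::
  "('a::topological_space, 'm::finite) chart set \<Rightarrow> (('a, 'm) chart \<Rightarrow> real^'m \<Rightarrow> real^'m^'m) \<Rightarrow> bool" where
  "riemannian_metric A G \<longleftrightarrow>
     smooth_atlas A \<and>
     (\<forall>(U,\<phi>)\<in>A. \<forall>i j. smooth_real (\<phi> ` U) (\<lambda>p. G (U,\<phi>) p $ i $ j)) \<and>
     (\<forall>(U,\<phi>)\<in>A. \<forall>p\<in>\<phi> ` U. transpose (G (U,\<phi>) p) = G (U,\<phi>) p \<and>
                             (\<forall>u. u \<noteq> 0 \<longrightarrow> gform (G (U,\<phi>) p) u u > 0)) \<and>
     (\<forall>(U,\<phi>)\<in>A. \<forall>(V,\<psi>)\<in>A. \<forall>x\<in>U \<inter> V. \<forall>u v.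
        gform (G (U,\<phi>) (\<phi> x)) u v =
        gform (G (V,\<psi>) (\<psi> x))
          (frechet_derivative (\<psi> \<circ> inv_into U \<phi>) (at (\<phi> x)) u)
          (frechet_derivative (\<psi> \<circ> inv_into U \<phi>) (at (\<phi> x)) v))"

definition geometric_function ::
  "(real^'m \<Rightarrow> real^'m \<Rightarrow> real) \<Rightarrow> (real^'n \<Rightarrow> real^'n \<Rightarrow> real) \<Rightarrow>
   (real^'m \<Rightarrow> real^'n) \<Rightarrow> real \<Rightarrow> bool" where
  "geometric_function ipV ipW T r \<longleftrightarrow> linear T \<and>
     (\<exists>C. subspace C \<and> {u. T u = 0} \<inter> C = {0} \<and>
          (\<forall>w. \<exists>k c. T k = 0 \<and> c \<in> C \<and> w = k + c) \<and>
          r > 0 \<and> (\<forall>u\<in>C. \<forall>v\<in>C. ipW (T u) (T v) = r * ipV u v))"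

definition local_rep :: "('a, 'm) chart \<Rightarrow> ('b, 'n) chart \<Rightarrow> ('a \<Rightarrow> 'b) \<Rightarrow> real^'m \<Rightarrow> real^'n" where
  "local_rep c d f = snd d \<circ> f \<circ> inv_into (fst c) (snd c)"

definition dlocal :: "('a, 'm) chart \<Rightarrow> ('b, 'n) chart \<Rightarrow> ('a \<Rightarrow> 'b) \<Rightarrow> 'a \<Rightarrow> real^'m \<Rightarrow> real^'n" where
  "dlocal c d f x = frechet_derivative (local_rep c d f) (at (snd c x))"

definition smooth_mfd_map ::
  "('a::topological_space, 'm::finite) chart set \<Rightarrow> ('b::topological_space, 'n::finite) chart set \<Rightarrow>
   ('a \<Rightarrow> 'b) \<Rightarrow> bool" where
  "smooth_mfd_map A B f \<longleftrightarrow> continuous_on UNIV f \<and>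
     (\<forall>(U,\<phi>)\<in>A. \<forall>(V,\<psi>)\<in>B.
        smooth_map (\<phi> ` (U \<inter> f -` V)) (local_rep (U,\<phi>) (V,\<psi>) f))"

definition smooth_mfd_fun :: "('a::topological_space, 'm::finite) chart set \<Rightarrow> ('a \<Rightarrow> real) \<Rightarrow> bool" where
  "smooth_mfd_fun A h \<longleftrightarrow> (\<forall>(U,\<phi>)\<in>A. smooth_real (\<phi> ` U) (h \<circ> inv_into U \<phi>))"

definition conformal_riemannian_morphism ::
  "('a::topological_space, 'm::finite) chart set \<Rightarrow> (('a, 'm) chart \<Rightarrow> real^'m \<Rightarrow> real^'m^'m) \<Rightarrow>
   ('b::topological_space, 'n::finite) chart set \<Rightarrow> (('b, 'n) chart \<Rightarrow> real^'n \<Rightarrow> real^'n^'n) \<Rightarrow>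
   ('a \<Rightarrow> 'b) \<Rightarrow> ('a \<Rightarrow> real) \<Rightarrow> bool" where
  "conformal_riemannian_morphism A G B H f Lam \<longleftrightarrow>
     smooth_mfd_map A B f \<and> smooth_mfd_fun A Lam \<and> (\<forall>x. Lam x > 0) \<and>
     (\<forall>c\<in>A. \<forall>d\<in>B. \<forall>x. x \<in> fst c \<longrightarrow> f x \<in> fst d \<longrightarrow>
        geometric_function (gform (G c (snd c x))) (gform (H d (snd d (f x))))
                           (dlocal c d f x) (Lam x))"

definition rank_df ::
  "('a, 'm::finite) chart set \<Rightarrow> ('b, 'n::finite) chart set \<Rightarrow> ('a \<Rightarrow> 'b) \<Rightarrow> 'a \<Rightarrow> int" where
  "rank_df A B f x =
     (let (c, d) = (SOME (c, d). c \<in> A \<and> d \<in> B \<and> x \<in> fst c \<and> f x \<in> fst d)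
      in int (dim (range (dlocal c d f x))))"

end

theory Submission
  imports Defs
begin


definition mnorm :: "real^'m^'n \<Rightarrow> real" where
  "mnorm M = (\<Sum>i\<in>UNIV. \<Sum>j\<in>UNIV. \<bar>M$i$j\<bar>)"

lemma mnorm_nonneg: "mnorm M \<ge> 0"
  unfolding mnorm_def by (intro sum_nonneg) auto

lemma mnorm_mult: "norm (M *v u) \<le> mnorm M * norm u"
proof -
  have "norm (M *v u) \<le> (\<Sum>i\<in>UNIV. \<bar>(M *v u)$i\<bar>)" by (rule norm_le_l1_cart)
  also have "\<dots> \<le> (\<Sum>i\<in>UNIV. (\<Sum>j\<in>UNIV. \<bar>M$i$j\<bar>) * norm u)"
  proof (rule sum_mono)
    fix i
    have "\<bar>(M *v u)$i\<bar> = \<bar>\<Sum>j\<in>UNIV. M$i$j * u$j\<bar>" by (simp add: matrix_vector_mult_def)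
    also have "\<dots> \<le> (\<Sum>j\<in>UNIV. \<bar>M$i$j * u$j\<bar>)" by (rule sum_abs)
    also have "\<dots> \<le> (\<Sum>j\<in>UNIV. \<bar>M$i$j\<bar> * norm u)"
      by (intro sum_mono) (simp add: abs_mult Finite_Cartesian_Product.component_le_norm_cart mult_left_mono)
    finally show "\<bar>(M *v u)$i\<bar> \<le> (\<Sum>j\<in>UNIV. \<bar>M$i$j\<bar>) * norm u" by (simp add: sum_distrib_right)
  qed
  also have "\<dots> = mnorm M * norm u" by (simp add: mnorm_def sum_distrib_right)
  finally show ?thesis .
qed

lemma gform_bound: "\<bar>gform M u u\<bar> \<le> mnorm M * norm u ^ 2"
proof -
  have "\<bar>gform M u u\<bar> \<le> norm u * norm (M *v u)" unfolding gform_def by (rule Cauchy_Schwarz_ineq2)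
  also have "\<dots> \<le> norm u * (mnorm M * norm u)" by (intro mult_left_mono mnorm_mult) auto
  finally show ?thesis by (simp add: power2_eq_square mult_ac)
qed

lemma gform_diff: "gform X u v - gform Y u v = gform (X - Y) u v"
  unfolding gform_def by (simp add: matrix_vector_mult_diff_rdistrib inner_diff_right)

lemma gform_zero[simp]: "gform X 0 0 = 0" "gform X u 0 = 0" "gform X 0 u = 0"
  unfolding gform_def by auto

lemma gform_scale: "gform X (t *\<^sub>R u) (t *\<^sub>R u) = t^2 * gform X u u"
  unfolding gform_def by (simp add: matrix_vector_mult_scaleR power2_eq_square)

lemma lin_diff:
  assumes "linear T" "linear S"
  shows "norm (T u - S u) \<le> mnorm (matrix T - matrix S) * norm u"
proof -
  have "T u - S u = (matrix T - matrix S) *v u"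
    using assms by (simp add: matrix_vector_mult_diff_rdistrib matrix_works)
  then show ?thesis using mnorm_mult by metis
qed

lemma posdef_bound:
  fixes G :: "real^'m^'m"
  assumes "\<forall>u. u \<noteq> 0 \<longrightarrow> gform G u u > 0"
  shows "\<exists>a>0. \<forall>u. gform G u u \<ge> a * norm u ^ 2"
proof -
  have lin: "linear (\<lambda>u. G *v u)" by (simp add: matrix_vector_mul_linear)
  have cont: "continuous_on (sphere 0 1) (\<lambda>u::real^'m. gform G u u)"
    unfolding gform_def
    by (intro continuous_intros linear_continuous_on linear_linear[THEN iffD1] lin)
  have ne: "sphere (0::real^'m) 1 \<noteq> {}"
  proof -
    have "axis undefined 1 \<in> sphere (0::real^'m) 1" by simp
    then show ?thesis by blast
  qed
  obtain x where x: "x \<in> sphere 0 1" "\<And>y. y \<in> sphere 0 1 \<Longrightarrow> gform G x x \<le> gform G y y"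
    using continuous_attains_inf[OF compact_sphere ne cont] by blast
  have "x \<noteq> 0" using x(1) by auto
  then have apos: "gform G x x > 0" using assms by auto
  show ?thesis
  proof (intro exI conjI allI)
    fix u :: "real^'m"
    show "gform G x x * norm u ^ 2 \<le> gform G u u"
    proof (cases "u = 0")
      case True then show ?thesis by simp
    next
      case False
      let ?v = "(1 / norm u) *\<^sub>R u"
      have "?v \<in> sphere 0 1" using False by simp
      then have "gform G x x \<le> gform G ?v ?v" by (rule x(2))
      also have "\<dots> = gform G u u / norm u ^ 2" by (simp add: gform_scale power_divide)
      finally show ?thesis using False by (simp add: pos_le_divide_eq)
    qed
  qed (rule apos)
qed



lemma lin_kernel: "linear T \<Longrightarrow> subspace {u. T u = 0}"
  by (simp add: subspace_def linear_0 linear_add linear_scale)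

lemma geo_rank:
  fixes T :: "real^'m \<Rightarrow> real^'n"
  assumes "linear T" "subspace C" "{u. T u = 0} \<inter> C = {0}" "\<forall>w. \<exists>k c. T k = 0 \<and> c \<in> C \<and> w = k + c"
  shows "dim (range T) = dim C"
proof -
  have "range T = T ` C"
  proof
    show "range T \<subseteq> T ` C"
    proof
      fix w assume "w \<in> range T"
      then obtain v where v: "w = T v" by auto
      obtain k c where "T k = 0" "c \<in> C" "v = k + c" using assms(4) by blast
      then have "w = T c" using v linear_add[OF assms(1)] by simp
      then show "w \<in> T ` C" using \<open>c \<in> C\<close> by blast
    qed
  qed auto
  moreover have "inj_on T (span C)"
  proof -
    have sp: "span C = C" using assms(2) by (simp add: span_eq_iff)
    show ?thesis unfolding sp
    proof (rule inj_onI)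
      fix u v assume uv: "u \<in> C" "v \<in> C" "T u = T v"
      then have "T (u - v) = 0" using linear_diff[OF assms(1)] by simp
      moreover have "u - v \<in> C" using uv assms(2) by (simp add: subspace_diff)
      ultimately have "u - v = 0" using assms(3) by blast
      then show "u = v" by simp
    qed
  qed
  ultimately show ?thesis using dim_image_eq[OF assms(1)] by simp
qed

lemma compl_dim:
  fixes T :: "real^'m \<Rightarrow> real^'n"
  assumes "linear T" "subspace C" "{u. T u = 0} \<inter> C = {0}" "\<forall>w. \<exists>k c. T k = 0 \<and> c \<in> C \<and> w = k + c"
  shows "dim {u. T u = 0} + dim C = dim (UNIV :: (real^'m) set)"
proof -
  have sK: "subspace {u. T u = 0}"
    using assms(1) by (rule lin_kernel)
  have "{x + y |x y. x \<in> {u. T u = 0} \<and> y \<in> C} = UNIV" using assms(4) by blast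
  then show ?thesis using dim_sums_Int[OF sK assms(2)] assms(3) by simp
qed

lemma pointwise:
  fixes T0 Ty :: "real^'m \<Rightarrow> real^'n" and G0 Gy :: "real^'m^'m" and H0 Hy :: "real^'n^'n"
  assumes g0: "geometric_function (gform G0) (gform H0) T0 r0"
    and gy: "geometric_function (gform Gy) (gform Hy) Ty ry"
    and a: "a > 0" "\<forall>u. gform G0 u u \<ge> a * norm u ^ 2"
    and b: "b = mnorm H0"
    and c: "c > 0" "ry \<ge> c"
    and eG: "mnorm (Gy - G0) \<le> a / 2"
    and eH: "mnorm (Hy - H0) \<le> 1"
    and e: "e = mnorm (matrix Ty - matrix T0)" "e < 1"
    and e1: "(b + 1) * e < c * a / 2" and e2: "(b + 1) * e < r0 * a"
  shows "dim (range Ty) = dim (range T0)"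
proof -
  from g0 obtain C0 where lT0: "linear T0" and C0: "subspace C0" "{u. T0 u = 0} \<inter> C0 = {0}"
      "\<forall>w. \<exists>k c. T0 k = 0 \<and> c \<in> C0 \<and> w = k + c" "r0 > 0"
      "\<forall>u\<in>C0. \<forall>v\<in>C0. gform H0 (T0 u) (T0 v) = r0 * gform G0 u v"
    unfolding geometric_function_def by blast
  from gy obtain Cy where lTy: "linear Ty" and Cy: "subspace Cy" "{u. Ty u = 0} \<inter> Cy = {0}"
      "\<forall>w. \<exists>k c. Ty k = 0 \<and> c \<in> Cy \<and> w = k + c" "ry > 0"
      "\<forall>u\<in>Cy. \<forall>v\<in>Cy. gform Hy (Ty u) (Ty v) = ry * gform Gy u v"
    unfolding geometric_function_def by blast
  have r0: "dim (range T0) = dim C0" using geo_rank[OF lT0 C0(1-3)] .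
  have ry: "dim (range Ty) = dim Cy" using geo_rank[OF lTy Cy(1-3)] .
  have b0: "b \<ge> 0" using b mnorm_nonneg by simp
  have e0: "e \<ge> 0" using e mnorm_nonneg by simp
  have diff: "norm (Ty u - T0 u) \<le> e * norm u" for u using lin_diff[OF lTy lT0] e by simp
  have Hb: "gform H0 w w \<le> b * norm w ^ 2" for w using gform_bound[of H0 w] b by simp
  have Hyb: "gform Hy w w \<le> (b + 1) * norm w ^ 2" for w
  proof -
    have "gform Hy w w = gform H0 w w + gform (Hy - H0) w w" using gform_diff[of Hy w w H0] by simp
    also have "\<dots> \<le> b * norm w ^ 2 + 1 * norm w ^ 2"
    proof -
      have "mnorm (Hy - H0) * norm w ^ 2 \<le> 1 * norm w ^ 2" using eH by (intro mult_right_mono) auto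
      then show ?thesis using Hb[of w] gform_bound[of "Hy - H0" w] by linarith
    qed
    finally show ?thesis by (simp add: algebra_simps)
  qed
  have ee: "e * e \<le> e" using e0 e(2) by (simp add: mult_left_le)
  have "dim C0 \<le> dim (range Ty)"
  proof -
    have inj: "inj_on Ty (span C0)"
    proof -
      have sp: "span C0 = C0" using C0(1) by (simp add: span_eq_iff)
      show ?thesis unfolding sp
      proof (rule inj_onI)
        fix u v assume uv: "u \<in> C0" "v \<in> C0" "Ty u = Ty v"
        let ?w = "u - v"
        have wC: "?w \<in> C0" using uv C0(1) by (simp add: subspace_diff)
        have tw: "Ty ?w = 0" using uv linear_diff[OF lTy] by simp
        have "?w = 0"
        proof (rule ccontr)
          assume nz: "?w \<noteq> 0"
          let ?n = "norm ?w ^ 2"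
          have npos: "?n > 0" using nz by simp
          have "r0 * (a * ?n) \<le> r0 * gform G0 ?w ?w"
            using a(2) C0(4) by (simp add: mult_left_mono)
          also have "\<dots> = gform H0 (T0 ?w) (T0 ?w)" using C0(5) wC by simp
          also have "\<dots> \<le> b * norm (T0 ?w) ^ 2" by (rule Hb)
          also have "norm (T0 ?w) \<le> e * norm ?w" using diff[of ?w] tw by (simp add: norm_minus_commute)
          then have "norm (T0 ?w) ^ 2 \<le> (e * norm ?w) ^ 2" by (simp add: power_mono)
          then have "norm (T0 ?w) ^ 2 \<le> (e * e) * ?n" by (simp add: power_mult_distrib power2_eq_square[of e])
          then have "b * norm (T0 ?w) ^ 2 \<le> b * ((e * e) * ?n)" using b0
            by (rule mult_left_mono)
          also have "\<dots> \<le> b * (e * ?n)" using ee b0 npos by (simp add: mult_left_mono mult_right_mono)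
          also have "\<dots> \<le> (b + 1) * e * ?n" using e0 npos by (simp add: algebra_simps)
          finally have "(r0 * a) * ?n \<le> ((b + 1) * e) * ?n" by (simp add: mult_ac)
          then have "r0 * a \<le> (b + 1) * e" using npos by simp
          then show False using e2 by simp
        qed
        then show "u = v" by simp
      qed
    qed
    have "dim (Ty ` C0) = dim C0" using dim_image_eq[OF lTy inj] .
    moreover have "dim (Ty ` C0) \<le> dim (range Ty)" by (rule dim_subset) auto
    ultimately show ?thesis by simp
  qed
  moreover
  have "dim Cy \<le> dim C0"
  proof (rule ccontr)
    assume "\<not> ?thesis"
    then have lt: "dim C0 < dim Cy" by simp
    let ?K = "{u. T0 u = 0}"
    have sK: "subspace ?K" using lT0 by (rule lin_kernel)
    have k: "dim ?K + dim C0 = dim (UNIV :: (real^'m) set)" using compl_dim[OF lT0 C0(1-3)] .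
    have s: "dim {x + y |x y. x \<in> Cy \<and> y \<in> ?K} + dim (Cy \<inter> ?K) = dim Cy + dim ?K"
      using dim_sums_Int[OF Cy(1) sK] .
    have "dim {x + y |x y. x \<in> Cy \<and> y \<in> ?K} \<le> dim (UNIV :: (real^'m) set)" by (rule dim_subset) auto
    then have "dim (Cy \<inter> ?K) \<noteq> 0" using s k lt by linarith
    then obtain u where u: "u \<in> Cy" "T0 u = 0" "u \<noteq> 0" by (auto simp: dim_eq_0)
    let ?n = "norm u ^ 2"
    have npos: "?n > 0" using u by simp
    have "gform Gy u u = gform G0 u u + gform (Gy - G0) u u" using gform_diff[of Gy u u G0] by simp
    also have "\<dots> \<ge> a * ?n - (a / 2) * ?n"
    proof -
      have "mnorm (Gy - G0) * ?n \<le> (a / 2) * ?n" using eG by (intro mult_right_mono) auto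
      then show ?thesis using a(2)[rule_format, of u] gform_bound[of "Gy - G0" u] by linarith
    qed
    finally have Gl: "gform Gy u u \<ge> (a / 2) * ?n" by simp
    have "c * ((a / 2) * ?n) \<le> ry * gform Gy u u"
      using Gl c a npos by (intro mult_mono) auto
    also have "\<dots> = gform Hy (Ty u) (Ty u)" using Cy(5) u by simp
    also have "\<dots> \<le> (b + 1) * norm (Ty u) ^ 2" by (rule Hyb)
    also have "norm (Ty u) \<le> e * norm u" using diff[of u] u by simp
    then have "norm (Ty u) ^ 2 \<le> (e * norm u) ^ 2" by (simp add: power_mono)
    then have "norm (Ty u) ^ 2 \<le> (e * e) * ?n" by (simp add: power_mult_distrib power2_eq_square[of e])
    then have "(b + 1) * norm (Ty u) ^ 2 \<le> (b + 1) * ((e * e) * ?n)" using b0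
      by (intro mult_left_mono) auto
    also have "\<dots> \<le> (b + 1) * (e * ?n)" using ee b0 npos by (simp add: mult_left_mono mult_right_mono)
    finally have "(c * a / 2) * ?n \<le> ((b + 1) * e) * ?n" by (simp add: mult_ac)
    then have "c * a / 2 \<le> (b + 1) * e" using npos by simp
    then show False using e1 by simp
  qed
  ultimately show ?thesis using r0 ry by simp
qed



lemma smooth_real_D0:
  assumes "smooth_real S g"
  shows "(\<forall>x\<in>S. g differentiable (at x)) \<and> (\<forall>i. smooth_real S (\<lambda>x. frechet_derivative g (at x) (axis i 1)))"
  using assms by (rule smooth_real.cases) (hypsubst, rule conjI, assumption+)


lemma smooth_real_D:
  assumes "smooth_real S g"
  shows "\<forall>x\<in>S. g differentiable (at x)" "smooth_real S (\<lambda>x. frechet_derivative g (at x) (axis i 1))"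
proof -
  show "\<forall>x\<in>S. g differentiable (at x)" using conjunct1[OF smooth_real_D0[OF assms]] .
  show "smooth_real S (\<lambda>x. frechet_derivative g (at x) (axis i 1))"
    using spec[OF conjunct2[OF smooth_real_D0[OF assms]], of i] .
qed

lemma smooth_real_cont:
  assumes "smooth_real S g" shows "continuous_on S g"
proof (rule continuous_at_imp_continuous_on, rule ballI)
  fix x assume "x \<in> S"
  then have "g differentiable at x" using smooth_real_D(1)[OF assms] by (rule bspec[rotated])
  then show "isCont g x" by (rule differentiable_imp_continuous_within)
qed

lemma smooth_map_diff:
  fixes F :: "real^'m \<Rightarrow> real^'n"
  assumes "smooth_map S F" "x \<in> S"
  shows "F differentiable (at x)"
proof -
  have "\<forall>i\<in>Basis. (\<lambda>z. F z \<bullet> i) differentiable at x"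
  proof
    fix i :: "real^'n" assume "i \<in> Basis"
    then obtain j where j: "i = axis j 1" by (auto simp: Basis_vec_def)
    have "smooth_real S (\<lambda>z. F z $ j)" using assms(1) unfolding smooth_map_def by blast
    then have "(\<lambda>z. F z $ j) differentiable at x"
      using smooth_real_D(1) assms(2) by blast
    then show "(\<lambda>z. F z \<bullet> i) differentiable at x" using j by (simp add: cart_eq_inner_axis)
  qed
  then show ?thesis using differentiable_componentwise_within[of F x UNIV] by simp
qed

lemma deriv_component:
  fixes F :: "real^'m \<Rightarrow> real^'n"
  assumes "F differentiable (at x)"
  shows "frechet_derivative F (at x) v $ j = frechet_derivative (\<lambda>z. F z $ j) (at x) v"
proof -
  have "(F has_derivative frechet_derivative F (at x)) (at x)" using assms frechet_derivative_works by blast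
  then have "((\<lambda>z. F z $ j) has_derivative (\<lambda>v. frechet_derivative F (at x) v $ j)) (at x)"
    using bounded_linear.has_derivative[OF bounded_linear_vec_nth] by blast
  then show ?thesis using frechet_derivative_at by metis
qed

lemma smooth_map_deriv_cont:
  fixes F :: "real^'m \<Rightarrow> real^'n"
  assumes "smooth_map S F"
  shows "continuous_on S (\<lambda>p. matrix (frechet_derivative F (at p)))"
proof -
  have c: "continuous_on S (\<lambda>p. frechet_derivative (\<lambda>z. F z $ j) (at p) (axis i 1))" for i j
  proof -
    have "smooth_real S (\<lambda>z. F z $ j)" using assms(1) unfolding smooth_map_def by blast
    then show ?thesis by (intro smooth_real_cont smooth_real_D(2))
  qed
  have "continuous_on S (\<lambda>p. \<chi> j i. frechet_derivative (\<lambda>z. F z $ j) (at p) (axis i 1))"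
    by (intro continuous_on_vec_lambda c)
  moreover have "(\<chi> j i. frechet_derivative (\<lambda>z. F z $ j) (at p) (axis i 1)) = matrix (frechet_derivative F (at p))"
    if "p \<in> S" for p
    using deriv_component[OF smooth_map_diff[OF assms that]] by (simp add: matrix_def)
  ultimately show ?thesis using continuous_on_eq by (metis (no_types, lifting))
qed

lemma chart_open_image:
  assumes "is_chart (U, \<phi>)" "open W" "W \<subseteq> U"
  shows "open (\<phi> ` W)"
proof -
  have ch: "open U" "open (\<phi> ` U)" "inj_on \<phi> U" "continuous_on (\<phi> ` U) (inv_into U \<phi>)"
    using assms(1) unfolding is_chart_def by auto
  have "\<phi> ` W = inv_into U \<phi> -` W \<inter> \<phi> ` U"
  proof
    show "\<phi> ` W \<subseteq> inv_into U \<phi> -` W \<inter> \<phi> ` U" using assms(3) ch(3) by (auto simp: inv_into_f_f)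
    show "inv_into U \<phi> -` W \<inter> \<phi> ` U \<subseteq> \<phi> ` W"
    proof
      fix p assume "p \<in> inv_into U \<phi> -` W \<inter> \<phi> ` U"
      then have "inv_into U \<phi> p \<in> W" "p = \<phi> (inv_into U \<phi> p)" by (auto simp: f_inv_into_f)
      then show "p \<in> \<phi> ` W" by blast
    qed
  qed
  then show ?thesis using ch(2,4) assms(2) continuous_on_open_vimage by metis
qed



lemma atlas_trans:
  assumes "smooth_atlas A" "(U,\<phi>) \<in> A" "(V,\<psi>) \<in> A"
  shows "smooth_map (\<phi> ` (U \<inter> V)) (\<psi> \<circ> inv_into U \<phi>)"
proof -
  have "\<forall>(U,\<phi>)\<in>A. \<forall>(V,\<psi>)\<in>A. smooth_map (\<phi> ` (U \<inter> V)) (\<psi> \<circ> inv_into U \<phi>)"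
    using assms(1) unfolding smooth_atlas_def by blast
  from bspec[OF this assms(2)] have "\<forall>(V,\<psi>)\<in>A. smooth_map (\<phi> ` (U \<inter> V)) (\<psi> \<circ> inv_into U \<phi>)" by simp
  from bspec[OF this assms(3)] show ?thesis by simp
qed

lemma atlas_chart: "smooth_atlas A \<Longrightarrow> c \<in> A \<Longrightarrow> is_chart c"
  unfolding smooth_atlas_def by blast

lemma atlas_cover: assumes "smooth_atlas A" shows "\<exists>U \<phi>. (U,\<phi>) \<in> A \<and> x \<in> U"
proof -
  have "\<Union>(fst ` A) = UNIV" using assms unfolding smooth_atlas_def by blast
  then have "x \<in> \<Union>(fst ` A)" by simp
  then obtain c where "c \<in> A" "x \<in> fst c" by blast
  then show ?thesis by (intro exI[of _ "fst c"] exI[of _ "snd c"]) simp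
qed


lemma metric_compat:
  assumes "riemannian_metric A G" "(U,\<phi>) \<in> A" "(V,\<psi>) \<in> A" "x \<in> U" "x \<in> V"
  shows "gform (G (U,\<phi>) (\<phi> x)) u v =
        gform (G (V,\<psi>) (\<psi> x))
          (frechet_derivative (\<psi> \<circ> inv_into U \<phi>) (at (\<phi> x)) u)
          (frechet_derivative (\<psi> \<circ> inv_into U \<phi>) (at (\<phi> x)) v)"
proof -
  have "\<forall>(U,\<phi>)\<in>A. \<forall>(V,\<psi>)\<in>A. \<forall>x\<in>U \<inter> V. \<forall>u v.
        gform (G (U,\<phi>) (\<phi> x)) u v =
        gform (G (V,\<psi>) (\<psi> x))
          (frechet_derivative (\<psi> \<circ> inv_into U \<phi>) (at (\<phi> x)) u)
          (frechet_derivative (\<psi> \<circ> inv_into U \<phi>) (at (\<phi> x)) v)"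
    using assms(1) unfolding riemannian_metric_def by blast
  from bspec[OF this assms(2)] have "\<forall>(V,\<psi>)\<in>A. \<forall>x\<in>U \<inter> V. \<forall>u v.
        gform (G (U,\<phi>) (\<phi> x)) u v =
        gform (G (V,\<psi>) (\<psi> x))
          (frechet_derivative (\<psi> \<circ> inv_into U \<phi>) (at (\<phi> x)) u)
          (frechet_derivative (\<psi> \<circ> inv_into U \<phi>) (at (\<phi> x)) v)" by simp
  from bspec[OF this assms(3)] show ?thesis using assms(4,5) by simp
qed

lemma metric_pd:
  assumes "riemannian_metric A G" "(U,\<phi>) \<in> A" "p \<in> \<phi> ` U" "u \<noteq> 0"
  shows "gform (G (U,\<phi>) p) u u > 0"
proof -
  have "\<forall>(U,\<phi>)\<in>A. \<forall>p\<in>\<phi> ` U. transpose (G (U,\<phi>) p) = G (U,\<phi>) p \<and>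
                             (\<forall>u. u \<noteq> 0 \<longrightarrow> gform (G (U,\<phi>) p) u u > 0)"
    using assms(1) unfolding riemannian_metric_def by blast
  from bspec[OF this assms(2)] have "\<forall>p\<in>\<phi> ` U. (\<forall>u. u \<noteq> 0 \<longrightarrow> gform (G (U,\<phi>) p) u u > 0)" by simp
  then show ?thesis using assms(3,4) by blast
qed

lemma metric_smooth:
  assumes "riemannian_metric A G" "(U,\<phi>) \<in> A"
  shows "smooth_real (\<phi> ` U) (\<lambda>p. G (U,\<phi>) p $ i $ j)"
proof -
  have "\<forall>(U,\<phi>)\<in>A. \<forall>i j. smooth_real (\<phi> ` U) (\<lambda>p. G (U,\<phi>) p $ i $ j)"
    using assms(1) unfolding riemannian_metric_def by blast
  from bspec[OF this assms(2)] show ?thesis by simp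
qed

lemma mfd_local:
  assumes "smooth_mfd_map A B f" "(U,\<phi>) \<in> A" "(V,\<psi>) \<in> B"
  shows "smooth_map (\<phi> ` (U \<inter> f -` V)) (local_rep (U,\<phi>) (V,\<psi>) f)"
proof -
  have "\<forall>(U,\<phi>)\<in>A. \<forall>(V,\<psi>)\<in>B.
        smooth_map (\<phi> ` (U \<inter> f -` V)) (local_rep (U,\<phi>) (V,\<psi>) f)"
    using assms(1) unfolding smooth_mfd_map_def by blast
  from bspec[OF this assms(2)] have "\<forall>(V,\<psi>)\<in>B.
        smooth_map (\<phi> ` (U \<inter> f -` V)) (local_rep (U,\<phi>) (V,\<psi>) f)" by simp
  from bspec[OF this assms(3)] show ?thesis by simp
qed

lemma trans_inj:
  assumes "riemannian_metric A G" "(U,\<phi>) \<in> A" "(V,\<psi>) \<in> A" "x \<in> U" "x \<in> V"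
    and "frechet_derivative (\<psi> \<circ> inv_into U \<phi>) (at (\<phi> x)) u = 0"
  shows "u = 0"
proof (rule ccontr)
  assume "u \<noteq> 0"
  then have "gform (G (U,\<phi>) (\<phi> x)) u u > 0" using metric_pd[OF assms(1,2)] assms(4) by blast
  moreover have "gform (G (U,\<phi>) (\<phi> x)) u u = 0"
    using metric_compat[OF assms(1-5), of u u] assms(6) by simp
  ultimately show False by simp
qed



lemma rank_indep:
  fixes A :: "('a::topological_space, 'm::finite) chart set"
    and B :: "('b::topological_space, 'n::finite) chart set" and f :: "'a \<Rightarrow> 'b"
  assumes RA: "riemannian_metric A G" and RB: "riemannian_metric B H" and sf: "smooth_mfd_map A B f"
    and c1: "(U,\<phi>) \<in> A" and c2: "(U',\<phi>') \<in> A" and d1: "(V,\<psi>) \<in> B" and d2: "(V',\<psi>') \<in> B"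
    and y: "y \<in> U" "y \<in> U'" "f y \<in> V" "f y \<in> V'"
  shows "dim (range (dlocal (U',\<phi>') (V',\<psi>') f y)) = dim (range (dlocal (U,\<phi>) (V,\<psi>) f y))"
proof -
  have atA: "smooth_atlas A" and atB: "smooth_atlas B" using RA RB unfolding riemannian_metric_def by auto
  have chU: "open U" "inj_on \<phi> U" using atlas_chart[OF atA c1] unfolding is_chart_def by auto
  have chU': "open U'" "inj_on \<phi>' U'" using atlas_chart[OF atA c2] unfolding is_chart_def by auto
  have chV: "open V" "inj_on \<psi> V" using atlas_chart[OF atB d1] unfolding is_chart_def by auto
  have chV': "open V'" using atlas_chart[OF atB d2] unfolding is_chart_def by auto
  have fc: "continuous_on UNIV f" using sf unfolding smooth_mfd_map_def by auto
  define L where "L = local_rep (U,\<phi>) (V,\<psi>) f"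
  define L' where "L' = local_rep (U',\<phi>') (V',\<psi>') f"
  define tM where "tM = \<phi> \<circ> inv_into U' \<phi>'"
  define tN where "tN = \<psi>' \<circ> inv_into V \<psi>"
  have smM: "smooth_map (\<phi>' ` (U' \<inter> U)) tM" unfolding tM_def by (rule atlas_trans[OF atA c2 c1])
  have smN: "smooth_map (\<psi> ` (V \<inter> V')) tN" unfolding tN_def by (rule atlas_trans[OF atB d1 d2])
  have smL: "smooth_map (\<phi> ` (U \<inter> f -` V)) L" unfolding L_def by (rule mfd_local[OF sf c1 d1])
  have tMy: "tM (\<phi>' y) = \<phi> y" unfolding tM_def using chU'(2) y(2) by (simp add: inv_into_f_f)
  have Ly: "L (\<phi> y) = \<psi> (f y)" unfolding L_def local_rep_def using chU(2) y(1) by (simp add: inv_into_f_f)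
  define DM where "DM = frechet_derivative tM (at (\<phi>' y))"
  define DL where "DL = frechet_derivative L (at (\<phi> y))"
  define DN where "DN = frechet_derivative tN (at (\<psi> (f y)))"
  have hM: "(tM has_derivative DM) (at (\<phi>' y))"
    unfolding DM_def frechet_derivative_works[symmetric]
    by (rule smooth_map_diff[OF smM]) (use y in auto)
  have hL: "(L has_derivative DL) (at (tM (\<phi>' y)))"
    unfolding tMy DL_def frechet_derivative_works[symmetric]
    by (rule smooth_map_diff[OF smL]) (use y in auto)
  have hN: "(tN has_derivative DN) (at ((L \<circ> tM) (\<phi>' y)))"
    unfolding o_def tMy Ly DN_def frechet_derivative_works[symmetric]
    by (rule smooth_map_diff[OF smN]) (use y in auto)
  have hc: "((tN \<circ> (L \<circ> tM)) has_derivative (DN \<circ> (DL \<circ> DM))) (at (\<phi>' y))"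
    by (rule diff_chain_at[OF diff_chain_at[OF hM hL] hN])
  define W where "W = U \<inter> U' \<inter> f -` (V \<inter> V')"
  have oW: "open W" unfolding W_def
    using chU(1) chU'(1) chV(1) chV'(1) fc by (intro open_Int open_vimage) auto
  have oPW: "open (\<phi>' ` W)" by (rule chart_open_image[OF atlas_chart[OF atA c2] oW]) (auto simp: W_def)
  have yW: "\<phi>' y \<in> \<phi>' ` W" using y by (auto simp: W_def)
  have eq: "(tN \<circ> (L \<circ> tM)) p = L' p" if pW: "p \<in> \<phi>' ` W" for p
  proof -
    obtain z where z: "z \<in> W" "p = \<phi>' z" using pW by blast
    have zz: "z \<in> U" "z \<in> U'" "f z \<in> V" "f z \<in> V'" using z(1) by (auto simp: W_def)
    have "inv_into U' \<phi>' p = z" using z zz chU'(2) by (simp add: inv_into_f_f)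
    then have "tM p = \<phi> z" by (simp add: tM_def)
    then have "L (tM p) = \<psi> (f z)" unfolding L_def local_rep_def using chU(2) zz by (simp add: inv_into_f_f)
    then have "tN (L (tM p)) = \<psi>' (f z)" unfolding tN_def using chV(2) zz by (simp add: inv_into_f_f)
    moreover have "L' p = \<psi>' (f z)" unfolding L'_def local_rep_def
      using \<open>inv_into U' \<phi>' p = z\<close> by simp
    ultimately show ?thesis by simp
  qed
  have "(L' has_derivative (DN \<circ> (DL \<circ> DM))) (at (\<phi>' y))"
    by (rule has_derivative_transform_within_open[OF hc oPW yW eq])
  then have DL': "dlocal (U',\<phi>') (V',\<psi>') f y = DN \<circ> (DL \<circ> DM)"
    unfolding dlocal_def L'_def[symmetric] snd_conv by (rule frechet_derivative_at[symmetric])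
  have DL0: "dlocal (U,\<phi>) (V,\<psi>) f y = DL" unfolding dlocal_def DL_def L_def by simp
  have linM: "linear DM" using hM by (rule has_derivative_linear)
  have linN: "linear DN" using hN by (rule has_derivative_linear)
  have injM: "inj DM"
    unfolding linear_injective_0[OF linM]
    using trans_inj[OF RA c2 c1 y(2) y(1)] by (simp add: DM_def tM_def)
  have injN: "inj DN"
    unfolding linear_injective_0[OF linN]
    using trans_inj[OF RB d1 d2 y(3) y(4)] by (simp add: DN_def tN_def)
  have surjM: "surj DM" by (rule linear_injective_imp_surjective[OF linM injM]) simp
  have "range (DN \<circ> (DL \<circ> DM)) = DN ` range DL"
  proof -
    have "range (DN \<circ> (DL \<circ> DM)) = DN ` DL ` range DM" by (simp add: image_comp)
    then show ?thesis using surjM by simp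
  qed
  moreover have "dim (DN ` range DL) = dim (range DL)"
    by (rule dim_image_eq[OF linN]) (use injN in \<open>auto intro: inj_on_subset\<close>)
  ultimately show ?thesis using DL' DL0 by simp
qed

lemma rho_eq:
  fixes A :: "('a::topological_space, 'm::finite) chart set"
    and B :: "('b::topological_space, 'n::finite) chart set" and f :: "'a \<Rightarrow> 'b"
  assumes RA: "riemannian_metric A G" and RB: "riemannian_metric B H" and sf: "smooth_mfd_map A B f"
    and c1: "(U,\<phi>) \<in> A" and d1: "(V,\<psi>) \<in> B" and y: "y \<in> U" "f y \<in> V"
  shows "rank_df A B f y = int (dim (range (dlocal (U,\<phi>) (V,\<psi>) f y)))"
proof -
  define P where "P = (\<lambda>(c::('a,'m) chart, d::('b,'n) chart). c \<in> A \<and> d \<in> B \<and> y \<in> fst c \<and> f y \<in> fst d)"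
  have "P ((U,\<phi>),(V,\<psi>))" using c1 d1 y by (simp add: P_def)
  then have Ps: "P (SOME p. P p)" by (rule someI)
  obtain c d where cd: "(SOME p. P p) = (c, d)" by (cases "SOME p. P p") auto
  obtain U' \<phi>' where c: "c = (U',\<phi>')" by (cases c)
  obtain V' \<psi>' where d: "d = (V',\<psi>')" by (cases d)
  have eq: "(SOME p. P p) = ((U',\<phi>'),(V',\<psi>'))" using cd c d by simp
  have "P ((U',\<phi>'),(V',\<psi>'))" using Ps eq by simp
  then have h: "(U',\<phi>') \<in> A" "(V',\<psi>') \<in> B" "y \<in> U'" "f y \<in> V'" unfolding P_def by auto
  have "rank_df A B f y = int (dim (range (dlocal (U',\<phi>') (V',\<psi>') f y)))"
    unfolding rank_df_def P_def[symmetric] eq by simp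
  also have "\<dots> = int (dim (range (dlocal (U,\<phi>) (V,\<psi>) f y)))"
    using rank_indep[OF RA RB sf c1 h(1) d1 h(2) y(1) h(3) y(2) h(4)] by simp
  finally show ?thesis .
qed



lemma mnorm_tendsto:
  assumes "(X \<longlongrightarrow> X0) F"
  shows "((\<lambda>y. mnorm (X y - X0)) \<longlongrightarrow> 0) F"
proof -
  have "((\<lambda>y. \<Sum>i\<in>UNIV. \<Sum>j\<in>UNIV. \<bar>(X y - X0)$i$j\<bar>) \<longlongrightarrow> (\<Sum>i\<in>UNIV. \<Sum>j\<in>UNIV. \<bar>(X0 - X0)$i$j\<bar>)) F"
    by (intro tendsto_intros assms)
  then show ?thesis by (simp add: mnorm_def)
qed

lemma cont_nhds:
  fixes g :: "'a::t2_space \<Rightarrow> 'b::topological_space"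
  assumes "continuous_on Om g" "open Om" "x \<in> Om"
  shows "(g \<longlongrightarrow> g x) (nhds x)"
proof -
  have "isCont g x" using assms continuous_on_eq_continuous_at by blast
  then show ?thesis by (simp add: isCont_def tendsto_at_iff_tendsto_nhds)
qed


theorem mainTheorem7:
  fixes A :: "('a::{t2_space, second_countable_topology}, 'm::finite) chart set"
    and G :: "('a, 'm) chart \<Rightarrow> real^'m \<Rightarrow> real^'m^'m"
    and B :: "('b::{t2_space, second_countable_topology}, 'n::finite) chart set"
    and H :: "('b, 'n) chart \<Rightarrow> real^'n \<Rightarrow> real^'n^'n"
    and f :: "'a \<Rightarrow> 'b" and Lam :: "'a \<Rightarrow> real"
    and \<rho> :: "'a \<Rightarrow> int"
  assumes "riemannian_metric A G" and "riemannian_metric B H"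
    and "conformal_riemannian_morphism A G B H f Lam"
    and "\<exists>c>0. \<forall>x. Lam x \<ge> c"
    and "\<rho> = rank_df A B f"
  shows "(\<forall>x. \<exists>U. open U \<and> x \<in> U \<and> (\<forall>y\<in>U. \<rho> y = \<rho> x)) \<and>
         (\<forall>x y. connected_component UNIV x y \<longrightarrow> \<rho> y = \<rho> x)"
proof -
  note RA = assms(1) and RB = assms(2)
  have sf: "smooth_mfd_map A B f" and Lpos: "\<forall>x. Lam x > 0"
    and geo: "\<forall>c\<in>A. \<forall>d\<in>B. \<forall>x. x \<in> fst c \<longrightarrow> f x \<in> fst d \<longrightarrow>
        geometric_function (gform (G c (snd c x))) (gform (H d (snd d (f x))))
                           (dlocal c d f x) (Lam x)"
    using assms(3) unfolding conformal_riemannian_morphism_def by auto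
  obtain cc where cc: "cc > 0" "\<forall>x. Lam x \<ge> cc" using assms(4) by blast
  have atA: "smooth_atlas A" and atB: "smooth_atlas B" using RA RB unfolding riemannian_metric_def by auto
  have fc: "continuous_on UNIV f" using sf unfolding smooth_mfd_map_def by auto
  have loc: "\<exists>S. open S \<and> x0 \<in> S \<and> (\<forall>y\<in>S. \<rho> y = \<rho> x0)" for x0
  proof -
    obtain U \<phi> where c1: "(U,\<phi>) \<in> A" "x0 \<in> U" using atlas_cover[OF atA] by blast
    obtain V \<psi> where d1: "(V,\<psi>) \<in> B" "f x0 \<in> V" using atlas_cover[OF atB] by blast
    have chU: "open U" "continuous_on U \<phi>" using atlas_chart[OF atA c1(1)] unfolding is_chart_def by auto
    have chV: "open V" "continuous_on V \<psi>" using atlas_chart[OF atB d1(1)] unfolding is_chart_def by auto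
    define Om where "Om = U \<inter> f -` V"
    have oO: "open Om" unfolding Om_def using chU(1) chV(1) fc by (intro open_Int open_vimage) auto
    have xO: "x0 \<in> Om" using c1 d1 by (simp add: Om_def)
    define L where "L = local_rep (U,\<phi>) (V,\<psi>) f"
    define T where "T y = dlocal (U,\<phi>) (V,\<psi>) f y" for y
    define GM where "GM y = G (U,\<phi>) (\<phi> y)" for y
    define HM where "HM y = H (V,\<psi>) (\<psi> (f y))" for y
    define TM where "TM y = matrix (T y)" for y
    have phiO: "continuous_on Om \<phi>" using chU(2) by (rule continuous_on_subset) (auto simp: Om_def)
    have cT: "continuous_on Om TM"
    proof -
      have "continuous_on (\<phi> ` Om) (\<lambda>p. matrix (frechet_derivative L (at p)))"
        unfolding Om_def L_def by (rule smooth_map_deriv_cont[OF mfd_local[OF sf c1(1) d1(1)]])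
      then have "continuous_on Om (\<lambda>y. matrix (frechet_derivative L (at (\<phi> y))))"
        using phiO by (rule continuous_on_compose2) auto
      then show ?thesis by (simp add: TM_def T_def dlocal_def L_def)
    qed
    have cG: "continuous_on Om GM"
    proof -
      have "continuous_on (\<phi> ` U) (\<lambda>p. \<chi> i j. G (U,\<phi>) p $ i $ j)"
        by (intro continuous_on_vec_lambda smooth_real_cont metric_smooth[OF RA c1(1)])
      then have "continuous_on (\<phi> ` U) (G (U,\<phi>))" by simp
      then have "continuous_on Om (\<lambda>y. G (U,\<phi>) (\<phi> y))"
        using phiO by (rule continuous_on_compose2) (auto simp: Om_def)
      then show ?thesis by (simp add: GM_def)
    qed
    have cH: "continuous_on Om HM"
    proof -
      have "continuous_on (\<psi> ` V) (\<lambda>p. \<chi> i j. H (V,\<psi>) p $ i $ j)"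
        by (intro continuous_on_vec_lambda smooth_real_cont metric_smooth[OF RB d1(1)])
      then have cH0: "continuous_on (\<psi> ` V) (H (V,\<psi>))" by simp
      have "continuous_on Om f" using fc by (rule continuous_on_subset) auto
      then have "continuous_on Om (\<lambda>y. \<psi> (f y))"
        using chV(2) by (intro continuous_on_compose2[of V \<psi> Om f]) (auto simp: Om_def)
      then have "continuous_on Om (\<lambda>y. H (V,\<psi>) (\<psi> (f y)))"
        using cH0 by (intro continuous_on_compose2[of "\<psi> ` V" "H (V,\<psi>)" Om "\<lambda>y. \<psi> (f y)"]) (auto simp: Om_def)
      then show ?thesis by (simp add: HM_def)
    qed
    have tG: "((\<lambda>y. mnorm (GM y - GM x0)) \<longlongrightarrow> 0) (nhds x0)"
      by (rule mnorm_tendsto[OF cont_nhds[OF cG oO xO]])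
    have tH: "((\<lambda>y. mnorm (HM y - HM x0)) \<longlongrightarrow> 0) (nhds x0)"
      by (rule mnorm_tendsto[OF cont_nhds[OF cH oO xO]])
    have tT: "((\<lambda>y. mnorm (TM y - TM x0)) \<longlongrightarrow> 0) (nhds x0)"
      by (rule mnorm_tendsto[OF cont_nhds[OF cT oO xO]])
    have "\<forall>u. u \<noteq> 0 \<longrightarrow> gform (GM x0) u u > 0"
      unfolding GM_def using metric_pd[OF RA c1(1)] c1(2) by blast
    then obtain a where a: "a > 0" "\<forall>u. gform (GM x0) u u \<ge> a * norm u ^ 2"
      using posdef_bound by blast
    define b where "b = mnorm (HM x0)"
    have b0: "b \<ge> 0" unfolding b_def by (rule mnorm_nonneg)
    define \<delta> where "\<delta> = min (cc * a / 2) (Lam x0 * a) / (b + 1)"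
    have \<delta>0: "\<delta> > 0" unfolding \<delta>_def using cc a Lpos b0 by auto
    have ev: "\<forall>\<^sub>F y in nhds x0. y \<in> Om \<and> mnorm (GM y - GM x0) < a / 2 \<and> mnorm (HM y - HM x0) < 1
               \<and> mnorm (TM y - TM x0) < 1 \<and> mnorm (TM y - TM x0) < \<delta>"
    proof -
      have e0: "\<forall>\<^sub>F y in nhds x0. y \<in> Om" by (rule eventually_nhds_in_open[OF oO xO])
      have e1: "\<forall>\<^sub>F y in nhds x0. mnorm (GM y - GM x0) < a / 2" using a(1) by (intro order_tendstoD(2)[OF tG]) simp
      have e2: "\<forall>\<^sub>F y in nhds x0. mnorm (HM y - HM x0) < 1" by (intro order_tendstoD(2)[OF tH]) simp
      have e3: "\<forall>\<^sub>F y in nhds x0. mnorm (TM y - TM x0) < 1" by (intro order_tendstoD(2)[OF tT]) simp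
      have e4: "\<forall>\<^sub>F y in nhds x0. mnorm (TM y - TM x0) < \<delta>" using \<delta>0 by (intro order_tendstoD(2)[OF tT])
      show ?thesis
        by (rule eventually_conj[OF e0 eventually_conj[OF e1 eventually_conj[OF e2 eventually_conj[OF e3 e4]]]])
    qed
    then obtain S where S: "open S" "x0 \<in> S" "\<And>y. y \<in> S \<Longrightarrow> y \<in> Om \<and> mnorm (GM y - GM x0) < a / 2 \<and> mnorm (HM y - HM x0) < 1
               \<and> mnorm (TM y - TM x0) < 1 \<and> mnorm (TM y - TM x0) < \<delta>"
      unfolding eventually_nhds by blast
    have geoL: "geometric_function (gform (GM y)) (gform (HM y)) (T y) (Lam y)" if "y \<in> Om" for y
    proof -
      have "geometric_function (gform (G (U,\<phi>) (snd (U,\<phi>) y))) (gform (H (V,\<psi>) (snd (V,\<psi>) (f y))))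
                           (dlocal (U,\<phi>) (V,\<psi>) f y) (Lam y)"
      proof -
        have "\<forall>x. x \<in> fst (U,\<phi>) \<longrightarrow> f x \<in> fst (V,\<psi>) \<longrightarrow>
          geometric_function (gform (G (U,\<phi>) (snd (U,\<phi>) x))) (gform (H (V,\<psi>) (snd (V,\<psi>) (f x))))
                           (dlocal (U,\<phi>) (V,\<psi>) f x) (Lam x)"
          using bspec[OF bspec[OF geo c1(1)] d1(1)] .
        then show ?thesis using that by (simp add: Om_def)
      qed
      then show ?thesis by (simp add: GM_def HM_def T_def)
    qed
    have rhoT: "\<rho> y = int (dim (range (T y)))" if "y \<in> Om" for y
      using rho_eq[OF RA RB sf c1(1) d1(1)] that assms(5) by (auto simp: Om_def T_def)
    show ?thesis
    proof (intro exI conjI ballI)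
      show "open S" "x0 \<in> S" using S by auto
      fix y assume yS: "y \<in> S"
      note Sy = S(3)[OF yS]
      define e where "e = mnorm (matrix (T y) - matrix (T x0))"
      have e: "e < 1" "e < \<delta>" using Sy by (auto simp: e_def TM_def)
      have "(b + 1) * e < (b + 1) * \<delta>" using e b0 by simp
      also have "\<dots> = min (cc * a / 2) (Lam x0 * a)" unfolding \<delta>_def using b0 by simp
      finally have e12: "(b + 1) * e < cc * a / 2" "(b + 1) * e < Lam x0 * a" by auto
      have yO: "y \<in> Om" using Sy by blast
      have "dim (range (T y)) = dim (range (T x0))"
      proof (rule pointwise[OF geoL[OF xO] geoL[OF yO] a b_def cc(1) _ _ _ e_def e(1) e12])
        show "cc \<le> Lam y" using cc(2) by blast
        show "mnorm (GM y - GM x0) \<le> a / 2" using Sy by linarith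
        show "mnorm (HM y - HM x0) \<le> 1" using Sy by linarith
      qed
      then show "\<rho> y = \<rho> x0" using rhoT[OF yO] rhoT[OF xO] by simp
    qed
  qed
  have conn: "\<rho> y = \<rho> x" if "connected_component UNIV x y" for x y
  proof (rule ccontr)
    assume ne: "\<rho> y \<noteq> \<rho> x"
    from that obtain C where C: "connected C" "x \<in> C" "y \<in> C" unfolding connected_component_def by (elim exE conjE)
    have o1: "open {z. \<rho> z = \<rho> x}"
    proof (subst open_subopen, intro ballI)
      fix z assume "z \<in> {z. \<rho> z = \<rho> x}"
      then have zx: "\<rho> z = \<rho> x" by simp
      obtain S where S: "open S" "z \<in> S" "\<forall>y\<in>S. \<rho> y = \<rho> z" using loc[of z] by blast
      have "S \<subseteq> {z. \<rho> z = \<rho> x}"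
      proof
        fix w assume "w \<in> S"
        then have "\<rho> w = \<rho> z" using S(3) by (rule bspec[rotated])
        then show "w \<in> {z. \<rho> z = \<rho> x}" using zx by simp
      qed
      then show "\<exists>T. open T \<and> z \<in> T \<and> T \<subseteq> {z. \<rho> z = \<rho> x}" using S(1,2) by (intro exI[of _ S] conjI)
    qed
    have o2: "open {z. \<rho> z \<noteq> \<rho> x}"
    proof (subst open_subopen, intro ballI)
      fix z assume "z \<in> {z. \<rho> z \<noteq> \<rho> x}"
      then have zx: "\<rho> z \<noteq> \<rho> x" by simp
      obtain S where S: "open S" "z \<in> S" "\<forall>y\<in>S. \<rho> y = \<rho> z" using loc[of z] by blast
      have "S \<subseteq> {z. \<rho> z \<noteq> \<rho> x}"
      proof
        fix w assume "w \<in> S"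
        then have "\<rho> w = \<rho> z" using S(3) by (rule bspec[rotated])
        then show "w \<in> {z. \<rho> z \<noteq> \<rho> x}" using zx by simp
      qed
      then show "\<exists>T. open T \<and> z \<in> T \<and> T \<subseteq> {z. \<rho> z \<noteq> \<rho> x}" using S(1,2) by (intro exI[of _ S] conjI)
    qed
    have "{z. \<rho> z = \<rho> x} \<inter> C = {} \<or> {z. \<rho> z \<noteq> \<rho> x} \<inter> C = {}"
      by (rule connectedD[OF C(1) o1 o2]) (fastforce, fastforce)
    moreover have "x \<in> {z. \<rho> z = \<rho> x} \<inter> C" using C by simp
    moreover have "y \<in> {z. \<rho> z \<noteq> \<rho> x} \<inter> C" using C ne by simp
    ultimately show False by (metis empty_iff)
  qed
  show ?thesis using loc conn by (intro conjI allI impI) auto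
qed

end
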